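(* If $X \subset S^{\mathbb{Z}}$ is a one-dimensional sofic shift, then its Cantor–Bendixson derivative $X^{(1)}$ is also a sofic shift.
   Context: A one-dimensional subshift over a finite alphabet $S$ is a closed, shift-invariant subset of $S^{\mathbb{Z}}$. A sofic shift is the image of a subshift of finite type (a subshift defined by a finite set of forbidden words) under a block map (a continuous shift-commuting map). The Cantor–Bendixson derivative $X^{(1)} = X'$ is the set of non-isolated points of $X$, i.e. $\{x \in X \mid x \in \overline{X \setminus \{x\}}\}$. *)

theory Defs
  imports "HOL-Analysis.Analysis"
begin

definition fullshift_top :: "'a set \<Rightarrow> (int \<Rightarrow> 'a) topology" where
  "fullshift_top A = product_topology (\<lambda>_::int. discrete_topology A) UNIV"

definition shift :: "(int \<Rightarrow> 'a) \<Rightarrow> (int \<Rightarrow> 'a)" where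
  "shift x = (\<lambda>i. x (i + 1))"

definition occurs_at :: "'a list \<Rightarrow> (int \<Rightarrow> 'a) \<Rightarrow> int \<Rightarrow> bool" where
  "occurs_at w x i \<longleftrightarrow> (\<forall>k < length w. x (i + int k) = w ! k)"

definition subshift :: "'a set \<Rightarrow> (int \<Rightarrow> 'a) set \<Rightarrow> bool" where
  "subshift A X \<longleftrightarrow> closedin (fullshift_top A) X \<and> shift ` X = X"

definition shift_of_forbidden :: "'a set \<Rightarrow> 'a list set \<Rightarrow> (int \<Rightarrow> 'a) set" where
  "shift_of_forbidden A F = {x. (\<forall>i. x i \<in> A) \<and> (\<forall>w\<in>F. \<forall>i. \<not> occurs_at w x i)}"

definition SFT :: "'a set \<Rightarrow> (int \<Rightarrow> 'a) set \<Rightarrow> bool" where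
  "SFT A Y \<longleftrightarrow> (\<exists>F. finite F \<and> Y = shift_of_forbidden A F)"

definition block_map :: "'a set \<Rightarrow> (int \<Rightarrow> 'a) set \<Rightarrow> 'b set \<Rightarrow> ((int \<Rightarrow> 'a) \<Rightarrow> (int \<Rightarrow> 'b)) \<Rightarrow> bool" where
  "block_map A Y B f \<longleftrightarrow>
     continuous_map (subtopology (fullshift_top A) Y) (fullshift_top B) f \<and>
     (\<forall>y\<in>Y. f (shift y) = shift (f y))"

text \<open>Sofic shift over alphabet B: image of an SFT (over some finite alphabet, coded
as a finite set of natural numbers) under a block map.\<close>
definition sofic :: "'b set \<Rightarrow> (int \<Rightarrow> 'b) set \<Rightarrow> bool" where
  "sofic B X \<longleftrightarrow> (\<exists>(A::nat set) Y f. finite A \<and> SFT A Y \<and> block_map A Y B f \<and> X = f ` Y)"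

definition CB_derivative :: "'a set \<Rightarrow> (int \<Rightarrow> 'a) set \<Rightarrow> (int \<Rightarrow> 'a) set" where
  "CB_derivative S X = {x \<in> X. x \<in> (fullshift_top S) closure_of (X - {x})}"

end

theory Submission imports Defs "HOL-Library.Countable" begin

lemma topspace_fs: "topspace (fullshift_top A) = {z. \<forall>i. z i \<in> A}"
  by (auto simp: fullshift_top_def PiE_UNIV_domain)

definition cyl :: "'a set \<Rightarrow> int set \<Rightarrow> (int\<Rightarrow>'a) \<Rightarrow> (int\<Rightarrow>'a) set" where
  "cyl A J x = {z. (\<forall>i. z i \<in> A) \<and> (\<forall>j\<in>J. z j = x j)}"

lemma cyl_open:
  assumes "finite J" shows "openin (fullshift_top A) (cyl A J x)"
proof -
  have eq: "cyl A J x = PiE UNIV (\<lambda>j. if j \<in> J then {x j} \<inter> A else A)"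
  proof (rule set_eqI)
    fix z show "z \<in> cyl A J x \<longleftrightarrow> z \<in> PiE UNIV (\<lambda>j. if j \<in> J then {x j} \<inter> A else A)"
      unfolding PiE_UNIV_domain Pi_iff cyl_def mem_Collect_eq
    proof (intro iffI ballI)
      fix i assume "(\<forall>i. z i \<in> A) \<and> (\<forall>j\<in>J. z j = x j)"
      then show "z i \<in> (if i \<in> J then {x i} \<inter> A else A)" by (cases "i \<in> J") (metis IntI singletonI, simp)
    next
      assume h: "\<forall>i\<in>UNIV. z i \<in> (if i \<in> J then {x i} \<inter> A else A)"
      show "(\<forall>i. z i \<in> A) \<and> (\<forall>j\<in>J. z j = x j)"
      proof (intro conjI allI ballI)
        fix i show "z i \<in> A" using h[rule_format, of i] by (auto split: if_splits)
      next
        fix j assume "j \<in> J" then show "z j = x j" using h[rule_format, of j] by auto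
      qed
    qed
  qed
  have "finite {i. (if i \<in> J then {x i} \<inter> A else A) \<noteq> A}"
    by (rule finite_subset[OF _ assms]) auto
  then show ?thesis unfolding eq fullshift_top_def
    by (subst openin_PiE_gen) auto
qed

lemma fin_dep_open:
  assumes "finite J" "P \<subseteq> topspace (fullshift_top A)"
    and "\<And>z z'. z \<in> P \<Longrightarrow> z' \<in> topspace (fullshift_top A) \<Longrightarrow> (\<forall>j\<in>J. z j = z' j) \<Longrightarrow> z' \<in> P"
  shows "openin (fullshift_top A) P"
proof (subst openin_subopen, intro ballI)
  fix z assume z: "z \<in> P"
  show "\<exists>T. openin (fullshift_top A) T \<and> z \<in> T \<and> T \<subseteq> P"
  proof (intro exI conjI)
    show "openin (fullshift_top A) (cyl A J z)" using cyl_open[OF assms(1)] .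
    show "z \<in> cyl A J z" using z assms(2) by (auto simp: cyl_def topspace_fs)
    show "cyl A J z \<subseteq> P" using assms(3)[OF z] by (auto simp: cyl_def topspace_fs)
  qed
qed

lemma fin_dep_closed:
  assumes "finite J" "P \<subseteq> topspace (fullshift_top A)"
    and "\<And>z z'. z \<in> topspace (fullshift_top A) \<Longrightarrow> z' \<in> topspace (fullshift_top A) \<Longrightarrow> (\<forall>j\<in>J. z j = z' j) \<Longrightarrow> z \<in> P \<Longrightarrow> z' \<in> P"
  shows "closedin (fullshift_top A) P"
  unfolding closedin_def
proof
  show "P \<subseteq> topspace (fullshift_top A)" by fact
  show "openin (fullshift_top A) (topspace (fullshift_top A) - P)"
    apply (rule fin_dep_open[OF assms(1)])
     apply blast
    using assms(3) by (metis Diff_iff)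
qed

lemma compact_fs: "finite A \<Longrightarrow> compact_space (fullshift_top A)"
  by (simp add: fullshift_top_def compact_space_product_topology compact_space_discrete_topology)

lemma KONIG:
  assumes "finite Q"
    and "\<And>n::nat. \<exists>t. (\<forall>i. t i \<in> Q) \<and> (\<forall>i. - int n \<le> i \<and> i \<le> int n \<longrightarrow> P i (t i) (t (i+1)))"
  shows "\<exists>t. (\<forall>i. t i \<in> Q) \<and> (\<forall>i. P i (t i) (t (i+1)))"
proof -
  define C where "C n = {t \<in> topspace (fullshift_top Q). \<forall>i. - int n \<le> i \<and> i \<le> int n \<longrightarrow> P i (t i) (t (i+1))}" for n :: nat
  have clo: "closedin (fullshift_top Q) (C n)" for n
  proof (rule fin_dep_closed[of "{- int n .. int n + 1}"])
    fix z z' assume "\<forall>j\<in>{- int n..int n + 1}. z j = z' j" "z \<in> C n" "z' \<in> topspace (fullshift_top Q)"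
    then show "z' \<in> C n" unfolding C_def by auto
  qed (auto simp: C_def)
  have ne: "C n \<noteq> {}" for n using assms(2)[of n] by (auto simp: C_def topspace_fs)
  have dec: "decseq C" unfolding decseq_def C_def by auto
  obtain t where "t \<in> (\<Inter>n. C n)"
    using compact_space_imp_nest[OF compact_fs[OF assms(1)] clo ne dec] by blast
  then have t: "\<And>n. t \<in> C n" by blast
  show ?thesis
  proof (intro exI conjI allI)
    show "t i \<in> Q" for i using t[of 0] by (auto simp: C_def topspace_fs)
    show "P i (t i) (t (i+1))" for i 
    proof -
      have "- int (nat \<bar>i\<bar>) \<le> i \<and> i \<le> int (nat \<bar>i\<bar>)" by linarith
      then show ?thesis using t[of "nat \<bar>i\<bar>"] unfolding C_def by blast
    qed
  qed
qed


definition gpath :: "('q\<times>'q) set \<Rightarrow> (int \<Rightarrow> 'q) \<Rightarrow> bool" where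
  "gpath T s \<longleftrightarrow> (\<forall>i. (s i, s (i+1)) \<in> T)"

definition gshift :: "('q\<times>'q) set \<Rightarrow> ('q \<Rightarrow> 'b) \<Rightarrow> (int \<Rightarrow> 'b) set" where
  "gshift T l = {(\<lambda>i. l (s i)) | s. gpath T s}"

lemma gpath_Domain: "gpath T s \<Longrightarrow> s i \<in> Domain T"
  unfolding gpath_def by blast

lemma cont_1block:
  assumes "Y \<subseteq> topspace (fullshift_top A)" "\<forall>y\<in>Y. g (y k) \<in> B"
  shows "continuous_map (subtopology (fullshift_top A) Y) (discrete_topology B) (\<lambda>y. g (y k))"
  unfolding continuous_map
proof (intro conjI allI impI)
  show "(\<lambda>y. g (y k)) ` topspace (subtopology (fullshift_top A) Y) \<subseteq> topspace (discrete_topology B)"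
    using assms by auto
  fix U assume "openin (discrete_topology B) U"
  have o: "openin (fullshift_top A) {z \<in> topspace (fullshift_top A). g (z k) \<in> U}"
    by (rule fin_dep_open[of "{k}"]) auto
  have "{x \<in> topspace (subtopology (fullshift_top A) Y). g (x k) \<in> U}
        = {z \<in> topspace (fullshift_top A). g (z k) \<in> U} \<inter> Y" using assms by auto
  then show "openin (subtopology (fullshift_top A) Y) {x \<in> topspace (subtopology (fullshift_top A) Y). g (x k) \<in> U}"
    using o by (auto simp: openin_subtopology)
qed

lemma gshift_sofic:
  fixes T :: "('q::countable \<times> 'q) set"
  assumes "finite T" "l ` Domain T \<subseteq> S"
  shows "sofic S (gshift T l)"
proof -
  define A where "A = to_nat ` Domain T"
  define Y where "Y = {(\<lambda>i. to_nat (s i)) | s. gpath T s}"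
  define F where "F = {[a,b] | a b. a \<in> A \<and> b \<in> A \<and> (from_nat a, from_nat b) \<notin> T}"
  define f where "f = (\<lambda>(y::int\<Rightarrow>nat) i. l (from_nat (y i)))"
  have finA: "finite A" unfolding A_def using assms(1) by (simp add: finite_Domain)
  have finF: "finite F"
  proof -
    have "F \<subseteq> (\<lambda>(a,b). [a,b]) ` (A \<times> A)" unfolding F_def by auto
    then show ?thesis using finA finite_subset by blast
  qed
  have YA: "Y \<subseteq> topspace (fullshift_top A)"
    unfolding Y_def topspace_fs A_def using gpath_Domain by fastforce
  have "Y = shift_of_forbidden A F"
  proof
    show "Y \<subseteq> shift_of_forbidden A F"
    proof
      fix y assume "y \<in> Y"
      then obtain s where s: "gpath T s" "y = (\<lambda>i. to_nat (s i))" unfolding Y_def by blast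
      have "\<not> occurs_at w y i" if "w \<in> F" for w i
      proof
        assume occ: "occurs_at w y i"
        from that obtain a b where w: "w = [a,b]" "(from_nat a, from_nat b) \<notin> T" unfolding F_def by blast
        have "y i = a" "y (i+1) = b" using occ unfolding w occurs_at_def
          by (auto dest: spec[of _ 0] spec[of _ 1])
        then show False using w s unfolding gpath_def by auto
      qed
      then show "y \<in> shift_of_forbidden A F"
        using YA \<open>y \<in> Y\<close> unfolding shift_of_forbidden_def topspace_fs by auto
    qed
  next
    show "shift_of_forbidden A F \<subseteq> Y"
    proof
      fix y assume y: "y \<in> shift_of_forbidden A F"
      define s where "s i = (from_nat (y i) :: 'q)" for i
      have ys: "y = (\<lambda>i. to_nat (s i))"
      proof
        fix i have "y i \<in> A" using y unfolding shift_of_forbidden_def by auto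
        then show "y i = to_nat (s i)" unfolding s_def A_def by auto
      qed
      have "gpath T s" unfolding gpath_def
      proof
        fix i show "(s i, s (i+1)) \<in> T"
        proof (rule ccontr)
          assume nt: "(s i, s (i+1)) \<notin> T"
          have "[y i, y (i+1)] \<in> F" unfolding F_def using y nt
            unfolding shift_of_forbidden_def s_def by auto
          moreover have "occurs_at [y i, y (i+1)] y i" unfolding occurs_at_def
            by (auto simp: less_Suc_eq)
          ultimately show False using y unfolding shift_of_forbidden_def by blast
        qed
      qed
      then show "y \<in> Y" unfolding Y_def using ys by blast
    qed
  qed
  then have sft: "SFT A Y" unfolding SFT_def using finF by blast
  have bm: "block_map A Y S f"
    unfolding block_map_def
  proof
    show "continuous_map (subtopology (fullshift_top A) Y) (fullshift_top S) f"
      unfolding fullshift_top_def[of S] continuous_map_componentwise_UNIV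
    proof
      fix k
      have "\<forall>y\<in>Y. l (from_nat (y k)) \<in> S"
        unfolding Y_def using assms(2) gpath_Domain by fastforce
      then show "continuous_map (subtopology (fullshift_top A) Y) (discrete_topology S) (\<lambda>x. f x k)"
        unfolding f_def using cont_1block[OF YA, of "\<lambda>a. l (from_nat a)" k S] by blast
    qed
    show "\<forall>y\<in>Y. f (shift y) = shift (f y)" unfolding f_def shift_def by auto
  qed
  have "gshift T l = f ` Y"
    unfolding gshift_def Y_def f_def by (auto simp: image_def)
  then show ?thesis unfolding sofic_def using finA sft bm by blast
qed


lemma open_nbhd_cyl:
  assumes "openin (fullshift_top A) T" "x \<in> T"
  shows "\<exists>n::nat. \<forall>z\<in>topspace (fullshift_top A). (\<forall>i. - int n \<le> i \<and> i \<le> int n \<longrightarrow> z i = x i) \<longrightarrow> z \<in> T"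
proof -
  obtain U where U: "finite {i. U i \<noteq> A}" "\<forall>i. openin (discrete_topology A) (U i)"
     "x \<in> PiE UNIV U" "PiE UNIV U \<subseteq> T"
    using assms unfolding fullshift_top_def openin_product_topology_alt by force
  obtain n where n: "\<forall>m\<in>(\<lambda>j. nat \<bar>j\<bar>) ` {i. U i \<noteq> A}. m \<le> n"
    using U(1) finite_nat_set_iff_bounded_le by blast
  show ?thesis
  proof (intro exI ballI impI)
    fix z assume z: "z \<in> topspace (fullshift_top A)" "\<forall>i. - int n \<le> i \<and> i \<le> int n \<longrightarrow> z i = x i"
    have "z j \<in> U j" for j
    proof (cases "U j = A")
      case True then show ?thesis using z(1) by (auto simp: topspace_fs)
    next
      case False
      then have "nat \<bar>j\<bar> \<le> n" using n by blast
      then have "- int n \<le> j \<and> j \<le> int n" by linarith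
      then have "z j = x j" using z(2) by blast
      then show ?thesis using U(3) by (auto simp: PiE_UNIV_domain)
    qed
    then show "z \<in> T" using U(4) by (auto simp: PiE_UNIV_domain)
  qed
qed

lemma CB_iff0:
  assumes "X \<subseteq> topspace (fullshift_top S)"
  shows "x \<in> CB_derivative S X \<longleftrightarrow>
    x \<in> X \<and> (\<forall>n::nat. \<exists>v\<in>X. v \<noteq> x \<and> (\<forall>i. - int n \<le> i \<and> i \<le> int n \<longrightarrow> v i = x i))"
proof
  assume x: "x \<in> CB_derivative S X"
  then have xX: "x \<in> X" and cl: "x \<in> (fullshift_top S) closure_of (X - {x})"
    unfolding CB_derivative_def by auto
  show "x \<in> X \<and> (\<forall>n::nat. \<exists>v\<in>X. v \<noteq> x \<and> (\<forall>i. - int n \<le> i \<and> i \<le> int n \<longrightarrow> v i = x i))"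
  proof (intro conjI allI xX)
    fix n :: nat
    have o: "openin (fullshift_top S) (cyl S {- int n .. int n} x)" by (rule cyl_open) simp
    have "x \<in> cyl S {- int n .. int n} x" using xX assms by (auto simp: cyl_def topspace_fs)
    then obtain y where "y \<in> X - {x}" "y \<in> cyl S {- int n .. int n} x"
      using cl o unfolding in_closure_of by blast
    then show "\<exists>v\<in>X. v \<noteq> x \<and> (\<forall>i. - int n \<le> i \<and> i \<le> int n \<longrightarrow> v i = x i)"
      by (auto simp: cyl_def)
  qed
next
  assume h: "x \<in> X \<and> (\<forall>n::nat. \<exists>v\<in>X. v \<noteq> x \<and> (\<forall>i. - int n \<le> i \<and> i \<le> int n \<longrightarrow> v i = x i))"
  have "x \<in> (fullshift_top S) closure_of (X - {x})"
    unfolding in_closure_of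
  proof (intro conjI allI impI)
    show "x \<in> topspace (fullshift_top S)" using h assms by auto
    fix T assume T: "x \<in> T \<and> openin (fullshift_top S) T"
    then obtain n :: nat where n: "\<forall>z\<in>topspace (fullshift_top S). (\<forall>i. - int n \<le> i \<and> i \<le> int n \<longrightarrow> z i = x i) \<longrightarrow> z \<in> T"
      using open_nbhd_cyl by blast
    obtain v where "v \<in> X" "v \<noteq> x" "\<forall>i. - int n \<le> i \<and> i \<le> int n \<longrightarrow> v i = x i" using h by blast
    then show "\<exists>y. y \<in> X - {x} \<and> y \<in> T" using n assms by blast
  qed
  then show "x \<in> CB_derivative S X" using h unfolding CB_derivative_def by blast
qed

definition Rp :: "(int\<Rightarrow>'b) set \<Rightarrow> (int\<Rightarrow>'b) \<Rightarrow> bool" where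
  "Rp X x \<longleftrightarrow> x \<in> X \<and> (\<forall>n::nat. \<exists>v\<in>X. (\<forall>i. - int n \<le> i \<and> i \<le> int n \<longrightarrow> v i = x i) \<and> (\<exists>d. d > int n \<and> v d \<noteq> x d))"

definition Lp :: "(int\<Rightarrow>'b) set \<Rightarrow> (int\<Rightarrow>'b) \<Rightarrow> bool" where
  "Lp X x \<longleftrightarrow> x \<in> X \<and> (\<forall>n::nat. \<exists>v\<in>X. (\<forall>i. - int n \<le> i \<and> i \<le> int n \<longrightarrow> v i = x i) \<and> (\<exists>d. d < - int n \<and> v d \<noteq> x d))"

lemma agree_mono: "\<forall>i. - int m \<le> i \<and> i \<le> int m \<longrightarrow> v i = x i \<Longrightarrow> n \<le> m \<Longrightarrow> \<forall>i. - int n \<le> i \<and> i \<le> int n \<longrightarrow> v i = x i"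
proof (intro allI impI)
  fix i assume "\<forall>i. - int m \<le> i \<and> i \<le> int m \<longrightarrow> v i = x i" "n \<le> m" "- int n \<le> i \<and> i \<le> int n"
  moreover have "- int m \<le> i \<and> i \<le> int m" using calculation(2,3) by linarith
  ultimately show "v i = x i" by blast
qed

lemma CB_iff:
  assumes "X \<subseteq> topspace (fullshift_top S)"
  shows "x \<in> CB_derivative S X \<longleftrightarrow> Rp X x \<or> Lp X x"
proof
  assume "x \<in> CB_derivative S X"
  then have xX: "x \<in> X" and h: "\<And>n::nat. \<exists>v\<in>X. v \<noteq> x \<and> (\<forall>i. - int n \<le> i \<and> i \<le> int n \<longrightarrow> v i = x i)"
    using CB_iff0[OF assms] by blast+
  show "Rp X x \<or> Lp X x"
  proof (rule disjCI)
    assume "\<not> Lp X x"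
    then obtain n0 :: nat where n0: "\<forall>v\<in>X. (\<forall>i. - int n0 \<le> i \<and> i \<le> int n0 \<longrightarrow> v i = x i) \<longrightarrow> (\<forall>d. d < - int n0 \<longrightarrow> v d = x d)"
      using xX unfolding Lp_def by blast
    show "Rp X x" unfolding Rp_def
    proof (intro conjI allI xX)
      fix n :: nat
      obtain v where v: "v \<in> X" "v \<noteq> x" "\<forall>i. - int (max n n0) \<le> i \<and> i \<le> int (max n n0) \<longrightarrow> v i = x i"
        using h by blast
      have a: "\<forall>i. - int n0 \<le> i \<and> i \<le> int n0 \<longrightarrow> v i = x i"
      proof (intro allI impI)
        fix i assume "- int n0 \<le> i \<and> i \<le> int n0"
        then have "- int (max n n0) \<le> i \<and> i \<le> int (max n n0)" by linarith
        then show "v i = x i" using v(3) by blast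
      qed
      obtain d where d: "v d \<noteq> x d" using v(2) by blast
      have "d > int (max n n0)"
      proof (rule ccontr)
        assume "\<not> d > int (max n n0)"
        moreover have "\<not> d < - int n0" using n0 v(1) a d by blast
        ultimately show False using v(3) d by auto
      qed
      then show "\<exists>v\<in>X. (\<forall>i. - int n \<le> i \<and> i \<le> int n \<longrightarrow> v i = x i) \<and> (\<exists>d>int n. v d \<noteq> x d)"
        using v d agree_mono[OF v(3), of n] by (intro bexI[of _ v] conjI exI[of _ d]) auto
    qed
  qed
next
  assume "Rp X x \<or> Lp X x"
  then have "x \<in> X \<and> (\<forall>n::nat. \<exists>v\<in>X. v \<noteq> x \<and> (\<forall>i. - int n \<le> i \<and> i \<le> int n \<longrightarrow> v i = x i))"
    unfolding Rp_def Lp_def by (metis (no_types, lifting))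
  then show "x \<in> CB_derivative S X" using CB_iff0[OF assms] by blast
qed

definition rfl :: "(int \<Rightarrow> 'a) \<Rightarrow> (int \<Rightarrow> 'a)" where "rfl x = (\<lambda>i. x (- i))"

lemma rfl_rfl[simp]: "rfl (rfl x) = x" by (simp add: rfl_def)

lemma rfl_gshift_sub: "rfl ` gshift T l \<subseteq> gshift (converse T) l"
proof
  fix y assume "y \<in> rfl ` gshift T l"
  then obtain s where s: "gpath T s" "y = rfl (\<lambda>i. l (s i))" unfolding gshift_def by blast
  have "gpath (converse T) (rfl s)" unfolding gpath_def rfl_def
  proof
    fix i have "(s (- i - 1), s (- i - 1 + 1)) \<in> T" using s(1) unfolding gpath_def by blast
    then show "(s (- i), s (- (i + 1))) \<in> converse T" by simp
  qed
  moreover have "y = (\<lambda>i. l (rfl s i))" using s(2) by (simp add: rfl_def)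
  ultimately show "y \<in> gshift (converse T) l" unfolding gshift_def by blast
qed

lemma rfl_gshift: "rfl ` gshift T l = gshift (converse T) l"
proof
  show "rfl ` gshift T l \<subseteq> gshift (converse T) l" by (rule rfl_gshift_sub)
  have "gshift (converse T) l = rfl ` rfl ` gshift (converse T) l" by (simp add: image_image)
  also have "\<dots> \<subseteq> rfl ` gshift (converse (converse T)) l"
    using rfl_gshift_sub by blast
  finally show "gshift (converse T) l \<subseteq> rfl ` gshift T l" by simp
qed

lemma Lp_rfl: "Lp X x \<longleftrightarrow> Rp (rfl ` X) (rfl x)"
proof -
  have inj: "inj rfl" by (metis injI rfl_rfl)
  have memX: "rfl x \<in> rfl ` X \<longleftrightarrow> x \<in> X" for x using inj by (rule inj_image_mem_iff)
  have e1: "(\<forall>i. - int n \<le> i \<and> i \<le> int n \<longrightarrow> rfl v i = rfl x i) \<longleftrightarrow> (\<forall>i. - int n \<le> i \<and> i \<le> int n \<longrightarrow> v i = x i)" for n v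
    unfolding rfl_def by (metis add.inverse_inverse minus_le_iff neg_le_iff_le)
  have e2: "(\<exists>d. d > int n \<and> rfl v d \<noteq> rfl x d) \<longleftrightarrow> (\<exists>d. d < - int n \<and> v d \<noteq> x d)" for n v
    unfolding rfl_def by (metis add.inverse_inverse neg_less_iff_less)
  have bex_img: "(\<exists>w\<in>rfl ` X. P w) \<longleftrightarrow> (\<exists>v\<in>X. P (rfl v))" for P by blast
  show ?thesis unfolding Lp_def Rp_def memX by (simp only: bex_img e1 e2)
qed

lemma Lp_set: "{x. Lp X x} = rfl ` {y. Rp (rfl ` X) y}"
proof -
  have "{x. Lp X x} = rfl ` rfl ` {x. Lp X x}" by (simp add: image_image)
  also have "rfl ` {x. Lp X x} = {y. Rp (rfl ` X) y}"
    unfolding Lp_rfl by (auto simp: image_def) (metis rfl_rfl)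
  finally show ?thesis .
qed

lemma gshift_union:
  "gshift T1 l1 \<union> gshift T2 l2 = gshift (map_prod Inl Inl ` T1 \<union> map_prod Inr Inr ` T2) (case_sum l1 l2)"
  (is "_ = gshift ?T ?l")
proof
  show "gshift T1 l1 \<union> gshift T2 l2 \<subseteq> gshift ?T ?l"
  proof
    fix x assume "x \<in> gshift T1 l1 \<union> gshift T2 l2"
    then show "x \<in> gshift ?T ?l"
    proof
      assume "x \<in> gshift T1 l1"
      then obtain s where s: "gpath T1 s" "x = (\<lambda>i. l1 (s i))" unfolding gshift_def by blast
      have "gpath ?T (\<lambda>i. Inl (s i))" using s(1) unfolding gpath_def by auto
      then show ?thesis using s(2) unfolding gshift_def by force
    next
      assume "x \<in> gshift T2 l2"
      then obtain s where s: "gpath T2 s" "x = (\<lambda>i. l2 (s i))" unfolding gshift_def by blast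
      have "gpath ?T (\<lambda>i. Inr (s i))" using s(1) unfolding gpath_def by auto
      then show ?thesis using s(2) unfolding gshift_def by force
    qed
  qed
  show "gshift ?T ?l \<subseteq> gshift T1 l1 \<union> gshift T2 l2"
  proof
    fix x assume "x \<in> gshift ?T ?l"
    then obtain u where u: "gpath ?T u" "x = (\<lambda>i. ?l (u i))" unfolding gshift_def by blast
    have step: "isl (u i) = isl (u (i+1))" for i
      using u(1) unfolding gpath_def by (auto dest!: spec[of _ i])
    have c: "isl (u i) = isl (u 0)" for i
    proof (induction i rule: int_induct[where k=0])
      case base then show ?case by simp
    next
      case (step1 i) then show ?case using step[of i] by simp
    next
      case (step2 i) then show ?case using step[of "i-1"] by simp
    qed
    show "x \<in> gshift T1 l1 \<union> gshift T2 l2"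
    proof (cases "isl (u 0)")
      case True
      then have ui: "u i = Inl (projl (u i))" for i using c[of i] by (cases "u i") auto
      have "gpath T1 (\<lambda>i. projl (u i))" unfolding gpath_def
      proof
        fix i have "(u i, u (i+1)) \<in> ?T" using u(1) unfolding gpath_def by blast
        then show "(projl (u i), projl (u (i+1))) \<in> T1" using ui[of i] ui[of "i+1"] by auto
      qed
      moreover have "x = (\<lambda>i. l1 (projl (u i)))" using u(2) ui by (metis sum.simps(5))
      ultimately have "x \<in> gshift T1 l1" unfolding gshift_def mem_Collect_eq
        by (intro exI[of _ "\<lambda>i. projl (u i)"]) simp
      then show ?thesis by blast
    next
      case False
      then have ui: "u i = Inr (projr (u i))" for i using c[of i] by (cases "u i") auto
      have "gpath T2 (\<lambda>i. projr (u i))" unfolding gpath_def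
      proof
        fix i have "(u i, u (i+1)) \<in> ?T" using u(1) unfolding gpath_def by blast
        then show "(projr (u i), projr (u (i+1))) \<in> T2" using ui[of i] ui[of "i+1"] by auto
      qed
      moreover have "x = (\<lambda>i. l2 (projr (u i)))" using u(2) ui by (metis sum.simps(6))
      ultimately have "x \<in> gshift T2 l2" unfolding gshift_def mem_Collect_eq
        by (intro exI[of _ "\<lambda>i. projr (u i)"]) simp
      then show ?thesis by blast
    qed
  qed
qed


definition divR :: "('q\<times>'q) set \<Rightarrow> ('q \<Rightarrow> 'b) \<Rightarrow> ('q\<times>'q) set" where
  "divR T l = {(p,q). \<exists>\<sigma> \<tau> j. gpath T \<sigma> \<and> gpath T \<tau> \<and> \<sigma> 0 = p \<and> \<tau> 0 = q \<and> j \<ge> 0 \<and> l (\<sigma> j) \<noteq> l (\<tau> j)}"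

definition T2 :: "('q\<times>'q) set \<Rightarrow> ('q \<Rightarrow> 'b) \<Rightarrow> (('q\<times>'q)\<times>('q\<times>'q)) set" where
  "T2 T l = {((p,q),(p',q')). (p,p') \<in> T \<and> (q,q') \<in> T \<and> (p,q) \<in> divR T l \<and> l p = l q}"

definition trs :: "int \<Rightarrow> (int \<Rightarrow> 'a) \<Rightarrow> (int \<Rightarrow> 'a)" where "trs k s = (\<lambda>i. s (i + k))"

lemma gpath_trs: "gpath T s \<Longrightarrow> gpath T (trs k s)"
  unfolding gpath_def trs_def
proof
  fix i assume "\<forall>i. (s i, s (i + 1)) \<in> T"
  then have "(s (i+k), s (i+k+1)) \<in> T" by blast
  moreover have "i + 1 + k = i + k + 1" by simp
  ultimately show "(s (i + k), s (i + 1 + k)) \<in> T" by (simp add: ac_simps)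
qed

definition glue :: "int \<Rightarrow> (int \<Rightarrow> 'a) \<Rightarrow> (int \<Rightarrow> 'a) \<Rightarrow> (int \<Rightarrow> 'a)" where
  "glue n s \<sigma> = (\<lambda>i. if i \<le> n then s i else \<sigma> (i - n))"

lemma gpath_glue:
  assumes "gpath T s" "gpath T \<sigma>" "\<sigma> 0 = s n"
  shows "gpath T (glue n s \<sigma>)"
  unfolding gpath_def
proof
  fix i
  consider "i < n" | "i = n" | "i > n" by linarith
  then show "(glue n s \<sigma> i, glue n s \<sigma> (i + 1)) \<in> T"
  proof cases
    case 1 then show ?thesis using assms(1) unfolding gpath_def glue_def by auto
  next
    case 2
    have "(\<sigma> 0, \<sigma> (0 + 1)) \<in> T" using assms(2) unfolding gpath_def by blast
    then show ?thesis using 2 assms(3) unfolding glue_def by simp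
  next
    case 3
    have "(\<sigma> (i - n), \<sigma> (i - n + 1)) \<in> T" using assms(2) unfolding gpath_def by blast
    moreover have "i + 1 - n = i - n + 1" by simp
    ultimately show ?thesis using 3 unfolding glue_def by (simp add: algebra_simps)
  qed
qed

lemma R_easy:
  assumes s: "gpath T s" and t: "gpath T t" and lab: "\<And>i. l (s i) = l (t i)"
    and dv: "\<And>i. (s i, t i) \<in> divR T l"
  shows "Rp (gshift T l) (\<lambda>i. l (s i))"
  unfolding Rp_def
proof (intro conjI allI)
  show "(\<lambda>i. l (s i)) \<in> gshift T l" using s unfolding gshift_def by blast
  fix n :: nat
  obtain \<sigma> \<tau> j where st: "gpath T \<sigma>" "gpath T \<tau>" "\<sigma> 0 = s n" "\<tau> 0 = t n" "j \<ge> 0" "l (\<sigma> j) \<noteq> l (\<tau> j)"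
  proof -
    have "\<exists>\<sigma> \<tau> j. gpath T \<sigma> \<and> gpath T \<tau> \<and> \<sigma> 0 = s n \<and> \<tau> 0 = t n \<and> j \<ge> 0 \<and> l (\<sigma> j) \<noteq> l (\<tau> j)"
      using dv[of n] unfolding divR_def by simp
    then show ?thesis using that by blast
  qed
  have j0: "j > 0"
  proof (rule ccontr)
    assume "\<not> j > 0" then have "j = 0" using st(5) by simp
    then show False using st lab[of n] by simp
  qed
  define s' where "s' = glue n s \<sigma>"
  define t' where "t' = glue n t \<tau>"
  have ps: "gpath T s'" "gpath T t'" unfolding s'_def t'_def using gpath_glue st s t by metis+
  let ?x = "\<lambda>i. l (s i)"
  have v1: "(\<lambda>i. l (s' i)) \<in> gshift T l" "(\<lambda>i. l (t' i)) \<in> gshift T l" using ps unfolding gshift_def by blast+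
  have ag1: "\<forall>i. - int n \<le> i \<and> i \<le> int n \<longrightarrow> l (s' i) = ?x i" unfolding s'_def glue_def by auto
  have ag2: "\<forall>i. - int n \<le> i \<and> i \<le> int n \<longrightarrow> l (t' i) = ?x i" unfolding t'_def glue_def using lab by auto
  have d1: "s' (n + j) = \<sigma> j" "t' (n + j) = \<tau> j" unfolding s'_def t'_def glue_def using j0 by auto
  show "\<exists>v\<in>gshift T l. (\<forall>i. - int n \<le> i \<and> i \<le> int n \<longrightarrow> v i = ?x i) \<and> (\<exists>d>int n. v d \<noteq> ?x (d))"
  proof (cases "l (\<sigma> j) = ?x (n + j)")
    case True
    then have "l (t' (n+j)) \<noteq> ?x (n+j)" using d1 st(6) by simp
    then show ?thesis using v1(2) ag2 j0 by (intro bexI[of _ "\<lambda>i. l (t' i)"] conjI exI[of _ "n+j"]) auto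
  next
    case False
    then have "l (s' (n+j)) \<noteq> ?x (n+j)" using d1 by simp
    then show ?thesis using v1(1) ag1 j0 by (intro bexI[of _ "\<lambda>i. l (s' i)"] conjI exI[of _ "n+j"]) auto
  qed
qed

lemma R_hard:
  assumes fin: "finite T" and R: "Rp (gshift T l) x"
  shows "\<exists>s t. gpath T s \<and> gpath T t \<and> x = (\<lambda>i. l (s i)) \<and> (\<forall>i. l (s i) = l (t i)) \<and> (\<forall>i. (s i, t i) \<in> divR T l)"
proof -
  obtain s where s: "gpath T s" "x = (\<lambda>i. l (s i))" using R unfolding Rp_def gshift_def by blast
  let ?P = "\<lambda>i a b. (a,b) \<in> T \<and> l a = x i \<and> (s i, a) \<in> divR T l"
  have "\<exists>t. (\<forall>i. t i \<in> Domain T) \<and> (\<forall>i. - int n \<le> i \<and> i \<le> int n \<longrightarrow> ?P i (t i) (t (i+1)))" for n :: nat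
  proof -
    obtain v d where v: "v \<in> gshift T l" "\<forall>i. - int n \<le> i \<and> i \<le> int n \<longrightarrow> v i = x i" "d > int n" "v d \<noteq> x d"
      using R unfolding Rp_def by blast
    obtain t where t: "gpath T t" "v = (\<lambda>i. l (t i))" using v(1) unfolding gshift_def by blast
    show ?thesis
    proof (intro exI conjI allI impI)
      fix i show "t i \<in> Domain T" using gpath_Domain[OF t(1)] .
      assume i: "- int n \<le> i \<and> i \<le> int n"
      show "(t i, t (i+1)) \<in> T" using t(1) unfolding gpath_def by blast
      show "l (t i) = x i" using v(2) i t(2) by auto
      show "(s i, t i) \<in> divR T l" unfolding divR_def
      proof (clarify, intro exI conjI)
        show "gpath T (trs i s)" "gpath T (trs i t)" using gpath_trs s(1) t(1) by blast+
        show "trs i s 0 = s i" "trs i t 0 = t i" by (simp_all add: trs_def)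
        show "d - i \<ge> 0" using i v(3) by simp
        show "l (trs i s (d - i)) \<noteq> l (trs i t (d - i))" using v(4) s(2) t(2) by (simp add: trs_def)
      qed
    qed
  qed
  then obtain t where t: "\<forall>i. t i \<in> Domain T" "\<forall>i. ?P i (t i) (t (i+1))"
    using KONIG[of "Domain T" ?P] fin by (auto simp: finite_Domain)
  show ?thesis
  proof (intro exI conjI allI)
    show "gpath T s" "x = (\<lambda>i. l (s i))" by (fact s)+
    show "gpath T t" using t unfolding gpath_def by blast
    fix i show "l (s i) = l (t i)" using t s(2) by auto
    show "(s i, t i) \<in> divR T l" using t by blast
  qed
qed

lemma R_char:
  assumes "finite T"
  shows "{x. Rp (gshift T l) x} = gshift (T2 T l) (\<lambda>pq. l (fst pq))"
proof
  show "{x. Rp (gshift T l) x} \<subseteq> gshift (T2 T l) (\<lambda>pq. l (fst pq))"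
  proof
    fix x assume "x \<in> {x. Rp (gshift T l) x}"
    then obtain s t where st: "gpath T s" "gpath T t" "x = (\<lambda>i. l (s i))" "\<forall>i. l (s i) = l (t i)" "\<forall>i. (s i, t i) \<in> divR T l"
      using R_hard[OF assms] by blast
    have "gpath (T2 T l) (\<lambda>i. (s i, t i))" using st unfolding gpath_def T2_def by auto
    then show "x \<in> gshift (T2 T l) (\<lambda>pq. l (fst pq))" unfolding gshift_def mem_Collect_eq
      using st(3) by (intro exI[of _ "\<lambda>i. (s i, t i)"]) simp
  qed
  show "gshift (T2 T l) (\<lambda>pq. l (fst pq)) \<subseteq> {x. Rp (gshift T l) x}"
  proof
    fix x assume "x \<in> gshift (T2 T l) (\<lambda>pq. l (fst pq))"
    then obtain u where u: "gpath (T2 T l) u" "x = (\<lambda>i. l (fst (u i)))" unfolding gshift_def by blast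
    have h: "((fst (u i), snd (u i)), (fst (u (i+1)), snd (u (i+1)))) \<in> T2 T l" for i
      using u(1) unfolding gpath_def by simp
    have "Rp (gshift T l) (\<lambda>i. l (fst (u i)))"
    proof (rule R_easy)
      show "gpath T (\<lambda>i. fst (u i))" "gpath T (\<lambda>i. snd (u i))" using h unfolding gpath_def T2_def by (auto simp: split_beta)
      show "l (fst (u i)) = l (snd (u i))" "(fst (u i), snd (u i)) \<in> divR T l" for i
        using h[of i] unfolding T2_def by auto
    qed
    then show "x \<in> {x. Rp (gshift T l) x}" using u(2) by simp
  qed
qed

lemma T2_finite: "finite T \<Longrightarrow> finite (T2 T l)"
proof -
  assume "finite T"
  have "T2 T l \<subseteq> (\<lambda>((p,p'),(q,q')). ((p,q),(p',q'))) ` (T \<times> T)"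
  proof
    fix z assume "z \<in> T2 T l"
    then obtain a b aa ba where z: "z = ((a,b),(aa,ba))" "(a,aa) \<in> T" "(b,ba) \<in> T"
      unfolding T2_def by auto
    show "z \<in> (\<lambda>((p,p'),(q,q')). ((p,q),(p',q'))) ` (T \<times> T)"
      by (rule image_eqI[where x="((a,aa),(b,ba))"]) (use z in auto)
  qed
  then show ?thesis using \<open>finite T\<close> finite_subset by blast
qed

lemma T2_Domain: "(\<lambda>pq. l (fst pq)) ` Domain (T2 T l) \<subseteq> l ` Domain T"
  unfolding T2_def by auto


lemma main_from_gshift:
  fixes T :: "('q::countable \<times> 'q) set"
  assumes fin: "finite T" and lab: "l ` Domain T \<subseteq> S" and X: "X = gshift T l"
  shows "sofic S (CB_derivative S X)"
proof -
  have XS: "X \<subseteq> topspace (fullshift_top S)"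
    unfolding X gshift_def topspace_fs using lab gpath_Domain by fastforce
  let ?l2 = "\<lambda>pq. l (fst pq)"
  have "CB_derivative S X = {x. Rp X x} \<union> {x. Lp X x}" using CB_iff[OF XS] by blast
  also have "{x. Rp X x} = gshift (T2 T l) ?l2" unfolding X by (rule R_char[OF fin])
  also have "{x. Lp X x} = gshift (converse (T2 (converse T) l)) ?l2"
  proof -
    have "{x. Lp X x} = rfl ` {y. Rp (gshift (converse T) l) y}"
      unfolding Lp_set X rfl_gshift ..
    also have "\<dots> = rfl ` gshift (T2 (converse T) l) ?l2"
      using R_char[of "converse T" l] fin by simp
    also have "\<dots> = gshift (converse (T2 (converse T) l)) ?l2" by (rule rfl_gshift)
    finally show ?thesis .
  qed
  also have "gshift (T2 T l) ?l2 \<union> gshift (converse (T2 (converse T) l)) ?l2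
     = gshift (map_prod Inl Inl ` T2 T l \<union> map_prod Inr Inr ` converse (T2 (converse T) l)) (case_sum ?l2 ?l2)"
    by (rule gshift_union)
  finally have eq: "CB_derivative S X = gshift (map_prod Inl Inl ` T2 T l \<union> map_prod Inr Inr ` converse (T2 (converse T) l)) (case_sum ?l2 ?l2)" .
  show ?thesis unfolding eq
  proof (rule gshift_sofic)
    show "finite (map_prod Inl Inl ` T2 T l \<union> map_prod Inr Inr ` converse (T2 (converse T) l))"
      using T2_finite fin by auto
    show "case_sum ?l2 ?l2 ` Domain (map_prod Inl Inl ` T2 T l \<union> map_prod Inr Inr ` converse (T2 (converse T) l)) \<subseteq> S"
      using lab unfolding T2_def by (auto simp: image_subset_iff)
  qed
qed


lemma occurs_trs: "occurs_at w (trs k y) i \<longleftrightarrow> occurs_at w y (i + k)"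
  unfolding occurs_at_def trs_def by (simp add: ac_simps)

lemma SFT_trs: "y \<in> shift_of_forbidden A F \<Longrightarrow> trs k y \<in> shift_of_forbidden A F"
  unfolding shift_of_forbidden_def by (auto simp: occurs_trs) (auto simp: trs_def)

lemma shift_trs: "shift (trs k y) = trs (k + 1) y"
  unfolding shift_def trs_def by (simp add: ac_simps)

lemma trs_0[simp]: "trs 0 y = y" by (simp add: trs_def)
lemma trs_trs: "trs a (trs b y) = trs (a + b) y" by (simp add: trs_def ac_simps)

lemma f_trs_nat:
  assumes "\<forall>y\<in>Y. f (shift y) = shift (f y)" "\<And>y k. y \<in> Y \<Longrightarrow> trs k y \<in> Y" "y \<in> Y"
  shows "f (trs (int m) y) = trs (int m) (f y)"
proof (induction m)
  case 0 then show ?case by simp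
next
  case (Suc m)
  have "f (trs (int (Suc m)) y) = f (shift (trs (int m) y))" by (simp add: shift_trs add.commute)
  also have "\<dots> = shift (f (trs (int m) y))" using assms by blast
  also have "\<dots> = trs (int (Suc m)) (f y)" using Suc by (simp add: shift_trs add.commute)
  finally show ?case .
qed

lemma f_trs:
  assumes "\<forall>y\<in>Y. f (shift y) = shift (f y)" "\<And>y k. y \<in> Y \<Longrightarrow> trs k y \<in> Y" "y \<in> Y"
  shows "f (trs k y) = trs k (f y)"
proof (cases "k \<ge> 0")
  case True
  then obtain m where "k = int m" by (metis nonneg_eq_int)
  then show ?thesis using f_trs_nat[OF assms] by simp
next
  case False
  then obtain m where m: "- k = int m" by (metis neg_0_le_iff_le nonneg_eq_int nle_le)
  have y': "trs k y \<in> Y" using assms(2,3) .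
  have "int m + k = 0" using m by simp
  then have "f y = f (trs (int m) (trs k y))" by (simp add: trs_trs)
  also have "\<dots> = trs (int m) (f (trs k y))" using f_trs_nat[OF assms(1,2) y'] .
  finally have "trs k (f y) = trs k (trs (int m) (f (trs k y)))" by simp
  moreover have "k + int m = 0" using m by simp
  ultimately show ?thesis by (simp add: trs_trs)
qed

lemma SFT_closed:
  assumes "finite A"
  shows "closedin (fullshift_top A) (shift_of_forbidden A F)"
  unfolding closedin_def
proof
  show "shift_of_forbidden A F \<subseteq> topspace (fullshift_top A)"
    unfolding shift_of_forbidden_def topspace_fs by auto
  show "openin (fullshift_top A) (topspace (fullshift_top A) - shift_of_forbidden A F)"
  proof (subst openin_subopen, intro ballI)
    fix z assume z: "z \<in> topspace (fullshift_top A) - shift_of_forbidden A F"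
    then obtain w i where wi: "w \<in> F" "occurs_at w z i"
      unfolding shift_of_forbidden_def topspace_fs by auto
    let ?C = "cyl A {i ..< i + int (length w)} z"
    show "\<exists>T. openin (fullshift_top A) T \<and> z \<in> T \<and> T \<subseteq> topspace (fullshift_top A) - shift_of_forbidden A F"
    proof (intro exI conjI)
      show "openin (fullshift_top A) ?C" by (rule cyl_open) simp
      show "z \<in> ?C" using z by (auto simp: cyl_def topspace_fs)
      show "?C \<subseteq> topspace (fullshift_top A) - shift_of_forbidden A F"
      proof
        fix z' assume z': "z' \<in> ?C"
        have "occurs_at w z' i" using wi(2) z' unfolding occurs_at_def cyl_def by auto
        then show "z' \<in> topspace (fullshift_top A) - shift_of_forbidden A F"
          using z' wi(1) unfolding cyl_def topspace_fs shift_of_forbidden_def by auto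
      qed
    qed
  qed
qed

lemma window:
  assumes finA: "finite A" and Y: "Y = shift_of_forbidden A F"
    and cont: "continuous_map (subtopology (fullshift_top A) Y) (fullshift_top S) f"
  shows "\<exists>r::nat. \<forall>y\<in>Y. \<forall>y'\<in>Y. (\<forall>j. - int r \<le> j \<and> j \<le> int r \<longrightarrow> y j = y' j) \<longrightarrow> f y 0 = f y' 0"
proof -
  have YA: "Y \<subseteq> topspace (fullshift_top A)" unfolding Y shift_of_forbidden_def topspace_fs by auto
  have c0: "continuous_map (subtopology (fullshift_top A) Y) (discrete_topology S) (\<lambda>y. f y 0)"
    using cont unfolding fullshift_top_def[of S] continuous_map_componentwise_UNIV by blast
  define good where "good y n \<longleftrightarrow> (\<forall>z\<in>Y. (\<forall>j. - int n \<le> j \<and> j \<le> int n \<longrightarrow> z j = y j) \<longrightarrow> f z 0 = f y 0)" for y n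
  have loc: "\<exists>n. good y n" if y: "y \<in> Y" for y
  proof -
    have fyS: "f y 0 \<in> S" using c0 y YA unfolding continuous_map by auto
    have "openin (subtopology (fullshift_top A) Y) {z \<in> topspace (subtopology (fullshift_top A) Y). f z 0 \<in> {f y 0}}"
      using c0 fyS unfolding continuous_map by auto
    then obtain V where V: "openin (fullshift_top A) V" "{z \<in> topspace (subtopology (fullshift_top A) Y). f z 0 \<in> {f y 0}} = V \<inter> Y"
      unfolding openin_subtopology by blast
    have yV: "y \<in> V" using V(2) y YA by auto
    obtain n where n: "\<forall>z\<in>topspace (fullshift_top A). (\<forall>i. - int n \<le> i \<and> i \<le> int n \<longrightarrow> z i = y i) \<longrightarrow> z \<in> V"
      using open_nbhd_cyl[OF V(1) yV] by blast
    have "good y n" unfolding good_def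
    proof (intro ballI impI)
      fix z assume "z \<in> Y" "\<forall>j. - int n \<le> j \<and> j \<le> int n \<longrightarrow> z j = y j"
      then have "z \<in> V \<inter> Y" using n YA by auto
      then show "f z 0 = f y 0" using V(2) by blast
    qed
    then show ?thesis by blast
  qed
  define G where "G = {(y,n). y \<in> Y \<and> good y n}"
  define cy where "cy = (\<lambda>(y,n::nat). cyl A {- int n .. int n} y)"
  have comp: "compactin (fullshift_top A) Y"
    using closedin_compact_space[OF compact_fs[OF finA]] SFT_closed[OF finA] Y by simp
  have opens: "\<forall>B\<in>cy ` G. openin (fullshift_top A) B" unfolding cy_def using cyl_open by auto
  have covers: "Y \<subseteq> \<Union>(cy ` G)"
  proof
    fix y assume y: "y \<in> Y"
    obtain n where "good y n" using loc[OF y] by blast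
    then have "(y,n) \<in> G" using y unfolding G_def by simp
    moreover have "y \<in> cy (y,n)" using y YA unfolding cy_def cyl_def topspace_fs by auto
    ultimately show "y \<in> \<Union>(cy ` G)" by blast
  qed
  obtain Fc where Fc: "finite Fc" "Fc \<subseteq> cy ` G" "Y \<subseteq> \<Union>Fc"
    using comp opens covers unfolding compactin_def by metis
  obtain G' where G': "G' \<subseteq> G" "finite G'" "Fc = cy ` G'"
    using finite_subset_image[OF Fc(1,2)] by blast
  define r where "r = Max (insert 0 (snd ` G'))"
  have rb: "n \<le> r" if "(y,n) \<in> G'" for y n
    unfolding r_def using G'(2) that by (auto intro!: Max_ge simp: image_iff) (metis snd_conv)
  show ?thesis
  proof (intro exI[of _ r] ballI impI)
    fix y y' assume yy: "y \<in> Y" "y' \<in> Y" "\<forall>j. - int r \<le> j \<and> j \<le> int r \<longrightarrow> y j = y' j"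
    obtain c n where cn: "(c,n) \<in> G'" "y \<in> cy (c,n)" using Fc(3) G'(3) yy(1) by auto
    have gd: "good c n" using cn(1) G'(1) unfolding G_def by auto
    have nr: "n \<le> r" using rb cn(1) by blast
    have a1: "\<forall>j. - int n \<le> j \<and> j \<le> int n \<longrightarrow> y j = c j" using cn(2) unfolding cy_def cyl_def by auto
    have a2: "\<forall>j. - int n \<le> j \<and> j \<le> int n \<longrightarrow> y' j = c j"
      using agree_mono[OF yy(3) nr] a1 by auto
    show "f y 0 = f y' 0" using gd yy(1,2) a1 a2 unfolding good_def by metis
  qed
qed


definition win :: "nat \<Rightarrow> (int \<Rightarrow> 'a) \<Rightarrow> int \<Rightarrow> 'a list" where
  "win R y i = map (\<lambda>k. y (i - int R + int k)) [0..<2*R+1]"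

lemma win_len[simp]: "length (win R y i) = 2*R+1" by (simp add: win_def)
lemma win_nth: "k < 2*R+1 \<Longrightarrow> win R y i ! k = y (i - int R + int k)"
  unfolding win_def by (simp del: upt_Suc)

lemma sofic_to_gshift:
  assumes "sofic S X"
  shows "\<exists>(T::(nat list \<times> nat list) set) l. finite T \<and> l ` Domain T \<subseteq> S \<and> X = gshift T l"
proof -
  obtain A Y f where AY: "finite (A::nat set)" "SFT A Y" "block_map A Y S f" "X = f ` Y"
    using assms unfolding sofic_def by blast
  obtain F where F: "finite F" "Y = shift_of_forbidden A F" using AY(2) unfolding SFT_def by blast
  have cont: "continuous_map (subtopology (fullshift_top A) Y) (fullshift_top S) f"
    and shc: "\<forall>y\<in>Y. f (shift y) = shift (f y)" using AY(3) unfolding block_map_def by auto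
  have Ytr: "\<And>y k. y \<in> Y \<Longrightarrow> trs k y \<in> Y" using F(2) SFT_trs by blast
  have YA: "Y \<subseteq> topspace (fullshift_top A)" unfolding F(2) shift_of_forbidden_def topspace_fs by auto
  have fS: "f y i \<in> S" if "y \<in> Y" for y i
  proof -
    have "f y \<in> topspace (fullshift_top S)" using cont that YA unfolding continuous_map by auto
    then show ?thesis by (simp add: topspace_fs)
  qed
  obtain r where r: "\<forall>y\<in>Y. \<forall>y'\<in>Y. (\<forall>j. - int r \<le> j \<and> j \<le> int r \<longrightarrow> y j = y' j) \<longrightarrow> f y 0 = f y' 0"
    using window[OF AY(1) F(2) cont] by blast
  obtain L where L: "\<forall>w\<in>F. length w \<le> L"
    using F(1) finite_nat_set_iff_bounded_le[of "length ` F"] by auto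
  define R where "R = r + L"
  define M where "M = 2*R+1"
  define T where "T = {(win R y i, win R y (i+1)) | y i. y \<in> Y}"
  define l where "l w = (SOME c. \<exists>y\<in>Y. \<exists>i. win R y i = w \<and> f y i = c)" for w
  have winA: "set (win R y i) \<subseteq> A" if "y \<in> Y" for y i
    using that unfolding F(2) shift_of_forbidden_def win_def by auto
  have finT: "finite T"
  proof -
    have "T \<subseteq> {xs. set xs \<subseteq> A \<and> length xs = M} \<times> {xs. set xs \<subseteq> A \<and> length xs = M}"
      unfolding T_def M_def using winA by auto
    then show ?thesis using finite_lists_length_eq[OF AY(1)] finite_subset by blast
  qed
  have fwin: "f y i = f y' i'" if "y \<in> Y" "y' \<in> Y" "win R y i = win R y' i'" for y y' i i'
  proof -
    have "f (trs i y) 0 = f (trs i' y') 0"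
    proof (rule r[rule_format])
      show "trs i y \<in> Y" "trs i' y' \<in> Y" using Ytr that by auto
      fix j assume j: "- int r \<le> j \<and> j \<le> int r"
      define k where "k = nat (j + int R)"
      have k: "k < 2*R+1" "int k = j + int R" unfolding k_def R_def using j by auto
      have "win R y i ! k = win R y' i' ! k" using that(3) by simp
      then have "y (i - int R + int k) = y' (i' - int R + int k)" using win_nth[OF k(1)] by metis
      then show "trs i y j = trs i' y' j" unfolding trs_def using k(2) by (simp add: ac_simps)
    qed
    then show ?thesis using f_trs[OF shc Ytr] that(1,2) by (simp add: trs_def)
  qed
  have lw: "l (win R y i) = f y i" if "y \<in> Y" for y i
  proof -
    have "\<exists>c. \<exists>y'\<in>Y. \<exists>i'. win R y' i' = win R y i \<and> f y' i' = c" using that by blast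
    then have "\<exists>y'\<in>Y. \<exists>i'. win R y' i' = win R y i \<and> f y' i' = l (win R y i)"
      unfolding l_def by (rule someI_ex)
    then show ?thesis using fwin that by metis
  qed
  have labS: "l ` Domain T \<subseteq> S" unfolding T_def using lw fS by auto
  have "X = gshift T l"
  proof
    show "X \<subseteq> gshift T l"
    proof
      fix x assume "x \<in> X"
      then obtain y where y: "y \<in> Y" "x = f y" using AY(4) by blast
      have "gpath T (\<lambda>i. win R y i)" unfolding gpath_def T_def using y(1) by blast
      moreover have "x = (\<lambda>i. l (win R y i))" using y lw by auto
      ultimately show "x \<in> gshift T l" unfolding gshift_def by blast
    qed
  next
    show "gshift T l \<subseteq> X"
    proof
      fix x assume "x \<in> gshift T l"
      then obtain s where s: "gpath T s" "x = (\<lambda>i. l (s i))" unfolding gshift_def by blast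
      have st: "\<exists>y\<in>Y. \<exists>j. s i = win R y j \<and> s (i+1) = win R y (j+1)" for i
        using s(1) unfolding gpath_def T_def by blast
      have dom: "\<exists>y\<in>Y. \<exists>j. s i = win R y j" for i using st by blast
      have len: "length (s i) = M" for i using dom[of i] M_def by auto
      have cons: "s i ! (k+1) = s (i+1) ! k" if "k + 1 < M" for i k
      proof -
        obtain y j where yj: "y \<in> Y" "s i = win R y j" "s (i+1) = win R y (j+1)" using st by blast
        have "s i ! (k+1) = y (j - int R + int (k+1))" using yj(2) win_nth[of "k+1" R y j] that M_def by simp
        moreover have "s (i+1) ! k = y (j + 1 - int R + int k)" using yj(3) win_nth[of k R y "j+1"] that M_def by simp
        moreover have "j - int R + int (k+1) = j + 1 - int R + int k" by simp
        ultimately show ?thesis by metis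
      qed
      define z where "z p = s p ! R" for p
      have right: "R + d < M \<Longrightarrow> s i ! (R + d) = z (i + int d)" for d i
      proof (induction d arbitrary: i)
        case 0 then show ?case by (simp add: z_def)
      next
        case (Suc d)
        have "s i ! (R + Suc d) = s (i+1) ! (R + d)" using cons[of "R+d" i] Suc.prems by simp
        also have "\<dots> = z (i + 1 + int d)" using Suc by simp
        finally show ?case by (simp add: ac_simps)
      qed
      have left: "d \<le> R \<Longrightarrow> s i ! (R - d) = z (i - int d)" for d i
      proof (induction d arbitrary: i)
        case 0 then show ?case by (simp add: z_def)
      next
        case (Suc d)
        have "s (i-1) ! ((R - Suc d) + 1) = s (i - 1 + 1) ! (R - Suc d)"
          using cons[of "R - Suc d" "i-1"] Suc.prems M_def by simp
        then have "s i ! (R - Suc d) = s (i-1) ! (R - d)" using Suc.prems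
          by (simp add: Suc_diff_Suc)
        also have "\<dots> = z (i - 1 - int d)" using Suc by simp
        also have "i - 1 - int d = i - int (Suc d)" by simp
        finally show ?case .
      qed
      have allk: "s i ! k = z (i - int R + int k)" if "k < M" for i k
      proof (cases "R \<le> k")
        case True
        have "s i ! k = z (i + int (k - R))" using right[of "k-R" i] that True by simp
        also have "i + int (k-R) = i - int R + int k" using True by simp
        finally show ?thesis .
      next
        case False
        have "s i ! k = z (i - int (R - k))" using left[of "R-k" i] False by simp
        also have "i - int (R - k) = i - int R + int k" using False by simp
        finally show ?thesis .
      qed
      have wz: "win R z i = s i" for i
      proof (rule nth_equalityI)
        show "length (win R z i) = length (s i)" using len M_def by simp
        fix k assume "k < length (win R z i)"
        then have k: "k < M" "k < 2*R+1" using M_def by auto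
        show "win R z i ! k = s i ! k" using win_nth[OF k(2)] allk[OF k(1)] by simp
      qed
      have zY: "z \<in> Y"
      proof -
        have zA: "z p \<in> A" for p
        proof -
          obtain y j where "y \<in> Y" "s p = win R y j" using dom by blast
          then have "z p = y j" using win_nth[of R R y j] by (simp add: z_def)
          then show ?thesis using \<open>y \<in> Y\<close> unfolding F(2) shift_of_forbidden_def by simp
        qed
        have nf: "\<not> occurs_at w z p" if w: "w \<in> F" for w p
        proof
          assume occ: "occurs_at w z p"
          obtain y' j' where y': "y' \<in> Y" "s (p + int R) = win R y' j'" using dom by blast
          have "occurs_at w y' (j' - int R)" unfolding occurs_at_def
          proof (intro allI impI)
            fix k assume k: "k < length w"
            have "length w \<le> L" using L w by blast
            then have kM: "k < 2*R+1" using k R_def by linarith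
            have "y' (j' - int R + int k) = win R y' j' ! k" using win_nth[OF kM, of y' j'] by simp
            also have "\<dots> = z (p + int k)" using allk[of k "p + int R"] kM y'(2) M_def by simp
            also have "\<dots> = w ! k" using occ k unfolding occurs_at_def by blast
            finally show "y' (j' - int R + int k) = w ! k" .
          qed
          then show False using y'(1) w unfolding F(2) shift_of_forbidden_def by blast
        qed
        show ?thesis unfolding F(2) shift_of_forbidden_def using zA nf by blast
      qed
      have "x = f z"
      proof
        fix i have "l (s i) = f z i" using wz[of i] lw[OF zY, of i] by simp
        then show "x i = f z i" using s(2) by simp
      qed
      then show "x \<in> X" using AY(4) zY by blast
    qed
  qed
  then show ?thesis using finT labS by blast
qed

theorem corollary4:
  fixes S :: "'a set" and X :: "(int \<Rightarrow> 'a) set"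
  assumes "finite S"
    and "sofic S X"
  shows "sofic S (CB_derivative S X)"
proof -
  obtain T :: "(nat list \<times> nat list) set" and l where "finite T" "l ` Domain T \<subseteq> S" "X = gshift T l"
    using sofic_to_gshift[OF assms(2)] by blast
  then show ?thesis by (rule main_from_gshift)
qed

end
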